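(* In the setting below (two parameters $(B,\theta)$, arbitrary representation of $\mathfrak{su}(2)$, arbitrary pure initial state $|\psi_0\rangle$), the QFIM and Uhlmann matrix are $$\mathcal Q_{BB}=4t^2\,\Delta_0[J_{\mathbf n_\theta}],\quad \mathcal Q_{\theta\theta}=16\sin^2\tfrac{Bt}{2}\,\Delta_0[J_{\mathbf n_1}],\quad \mathcal Q_{B\theta}=-4t\sin\tfrac{Bt}{2}\big(\langle\{J_{\mathbf n_1},J_{\mathbf n_\theta}\}\rangle_0-2\langle J_{\mathbf n_1}\rangle_0\langle J_{\mathbf n_\theta}\rangle_0\big),$$ $\mathcal D_{BB}=\mathcal D_{\theta\theta}=0$, $\mathcal D_{\theta B}=-\mathcal D_{B\theta}=4t\sin\tfrac{Bt}{2}\langle J_{\mathbf n_2}\rangle_0$. Consequently $\det\boldsymbol{\mathcal D}=16t^2\sin^2\tfrac{Bt}{2}\langle J_{\mathbf n_2}\rangle_0^2$, $\det\boldsymbol{\mathcal Q}=16t^2\sin^2\tfrac{Bt}{2}\Big(4\Delta_0[J_{\mathbf n_\theta}]\Delta_0[J_{\mathbf n_1}]-\big(\langle\{J_{\mathbf n_1},J_{\mathbf n_\theta}\}\rangle_0-2\langle J_{\mathbf n_1}\rangle_0\langle J_{\mathbf n_\theta}\rangle_0\big)^2\Big)$, and whenever $\det\boldsymbol{\mathcal Q}\neq0$ the asymptotic incompatibility equals $\mathcal R=\sqrt{\det\boldsymbol{\mathcal D}/\det\boldsymbol{\mathcal Q}}$.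
   Context: $J_x,J_y,J_z$ are Hermitian operators on a finite-dimensional Hilbert space with $[J_x,J_y]=iJ_z$, $[J_y,J_z]=iJ_x$, $[J_z,J_x]=iJ_y$; $J_{\mathbf n}:=n_xJ_x+n_yJ_y+n_zJ_z$. Fix $t\in\mathbb R$, let $H=B(\cos\theta J_x+\sin\theta J_z)$, $U=e^{-itH}$, and $|\psi_{B,\theta}\rangle=U|\psi_0\rangle$ for a unit vector $|\psi_0\rangle$. Let $\mathbf n_\theta=(\cos\theta,0,\sin\theta)$, $\mathbf n_1=(\cos\frac{Bt}{2}\sin\theta,-\sin\frac{Bt}{2},-\cos\frac{Bt}{2}\cos\theta)$, $\mathbf n_2=\mathbf n_\theta\times\mathbf n_1$. Write $\langle X\rangle_0=\langle\psi_0|X|\psi_0\rangle$ and $\Delta_0[X]=\langle X^2\rangle_0-\langle X\rangle_0^2$. With $\mathcal H_l=i(\partial_lU^\dagger)U$ for $l\in\{B,\theta\}$, the quantum Fisher information matrix (QFIM) of this pure unitary model is $\mathcal Q_{ll'}=2\langle\{\mathcal H_l,\mathcal H_{l'}\}\rangle_0-4\langle\mathcal H_l\rangle_0\langle\mathcal H_{l'}\rangle_0$ and the Uhlmann matrix is $\mathcal D_{ll'}=-2i\langle[\mathcal H_l,\mathcal H_{l'}]\rangle_0$ (real, antisymmetric). The asymptotic incompatibility (AI) is $\mathcal R=\max\{|\mu|:\mu \text{ an eigenvalue of }\boldsymbol{\mathcal Q}^{-1}\boldsymbol{\mathcal D}\}$, defined when $\boldsymbol{\mathcal Q}$ is invertible.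 *)

theory Defs
  imports "HOL-Analysis.Analysis"
begin

definition cscale :: "complex \<Rightarrow> complex^'n^'m \<Rightarrow> complex^'n^'m" where
  "cscale c A = (\<chi> i j. c * A$i$j)"

definition cadj :: "complex^'n^'m \<Rightarrow> complex^'m^'n" where
  "cadj A = (\<chi> i j. cnj (A$j$i))"

definition hermitian :: "complex^'n^'n \<Rightarrow> bool" where
  "hermitian A \<longleftrightarrow> cadj A = A"

definition comm :: "complex^'n^'n \<Rightarrow> complex^'n^'n \<Rightarrow> complex^'n^'n" where
  "comm A B = A ** B - B ** A"

definition acomm :: "complex^'n^'n \<Rightarrow> complex^'n^'n \<Rightarrow> complex^'n^'n" where
  "acomm A B = A ** B + B ** A"

definition mpow :: "complex^'n^'n \<Rightarrow> nat \<Rightarrow> complex^'n^'n" where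
  "mpow A k = ((\<lambda>X. A ** X) ^^ k) (mat 1)"

definition mexp :: "complex^'n^'n \<Rightarrow> complex^'n^'n" where
  "mexp A = (\<Sum>k. (1 / fact k) *\<^sub>R mpow A k)"

definition expect :: "complex^'n \<Rightarrow> complex^'n^'n \<Rightarrow> complex" where
  "expect psi X = (\<Sum>i\<in>UNIV. cnj (psi$i) * (X *v psi)$i)"

definition variance :: "complex^'n \<Rightarrow> complex^'n^'n \<Rightarrow> complex" where
  "variance psi X = expect psi (X ** X) - (expect psi X)^2"

definition Jdir :: "complex^'n^'n \<Rightarrow> complex^'n^'n \<Rightarrow> complex^'n^'n \<Rightarrow> real^3 \<Rightarrow> complex^'n^'n" where
  "Jdir Jx Jy Jz n = cscale (of_real (n$1)) Jx + cscale (of_real (n$2)) Jy + cscale (of_real (n$3)) Jz"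

definition Ham :: "complex^'n^'n \<Rightarrow> complex^'n^'n \<Rightarrow> real \<Rightarrow> real \<Rightarrow> complex^'n^'n" where
  "Ham Jx Jz B \<theta> = cscale (of_real B) (cscale (of_real (cos \<theta>)) Jx + cscale (of_real (sin \<theta>)) Jz)"

definition Uop :: "complex^'n^'n \<Rightarrow> complex^'n^'n \<Rightarrow> real \<Rightarrow> real \<Rightarrow> real \<Rightarrow> complex^'n^'n" where
  "Uop Jx Jz t B \<theta> = mexp (cscale (- \<i> * of_real t) (Ham Jx Jz B \<theta>))"

definition gen :: "complex^'n^'n \<Rightarrow> complex^'n^'n \<Rightarrow> real \<Rightarrow> real \<Rightarrow> real \<Rightarrow> 2 \<Rightarrow> complex^'n^'n" where
  "gen Jx Jz t B \<theta> l =
     (if l = 1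
      then cscale \<i> (vector_derivative (\<lambda>b. cadj (Uop Jx Jz t b \<theta>)) (at B) ** Uop Jx Jz t B \<theta>)
      else cscale \<i> (vector_derivative (\<lambda>th. cadj (Uop Jx Jz t B th)) (at \<theta>) ** Uop Jx Jz t B \<theta>))"

text \<open>QFIM and Uhlmann matrix, indexed by 1 = B and 2 = theta.\<close>
definition QFIM :: "complex^'n^'n \<Rightarrow> complex^'n^'n \<Rightarrow> real \<Rightarrow> complex^'n \<Rightarrow> real \<Rightarrow> real \<Rightarrow> complex^2^2" where
  "QFIM Jx Jz t psi0 B \<theta> = (\<chi> l l'.
     2 * expect psi0 (acomm (gen Jx Jz t B \<theta> l) (gen Jx Jz t B \<theta> l'))
     - 4 * expect psi0 (gen Jx Jz t B \<theta> l) * expect psi0 (gen Jx Jz t B \<theta> l'))"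

definition Uhlmann :: "complex^'n^'n \<Rightarrow> complex^'n^'n \<Rightarrow> real \<Rightarrow> complex^'n \<Rightarrow> real \<Rightarrow> real \<Rightarrow> complex^2^2" where
  "Uhlmann Jx Jz t psi0 B \<theta> = (\<chi> l l'.
     - 2 * \<i> * expect psi0 (comm (gen Jx Jz t B \<theta> l) (gen Jx Jz t B \<theta> l')))"

definition is_eigenvalue :: "complex^'k^'k \<Rightarrow> complex \<Rightarrow> bool" where
  "is_eigenvalue M \<mu> \<longleftrightarrow> (\<exists>v. v \<noteq> 0 \<and> M *v v = \<mu> *s v)"

definition AI :: "complex^2^2 \<Rightarrow> complex^2^2 \<Rightarrow> real" where
  "AI Q D = Max {cmod \<mu> | \<mu>. is_eigenvalue (matrix_inv Q ** D) \<mu>}"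

end

theory Submission
  imports Defs
begin


typedef (overloaded) ('a::finite) cm = "UNIV :: (complex^'a^'a) set"
  morphisms Rep_cm Abs_cm by auto

setup_lifting type_definition_cm

lemma bl_mv: "bounded_linear (\<lambda>v::complex^'a. (A::complex^'a^'n) *v v)"
  using matrix_vector_mul_bounded_linear[of A] by simp

lemma onorm_scaleR_mat: "onorm (\<lambda>v. (r *\<^sub>R A) *v v) = \<bar>r\<bar> * onorm (\<lambda>v. (A::complex^'a^'a) *v v)"
proof -
  have "(\<lambda>v. (r *\<^sub>R A) *v v) = (\<lambda>v. r *\<^sub>R (A *v v))"
    by (auto simp: vec_eq_iff matrix_vector_mult_def scaleR_sum_right)
  then show ?thesis
    by (simp add: onorm_scaleR bl_mv)
qed

instantiation cm :: (finite) real_normed_vector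
begin
lift_definition zero_cm :: "'a cm" is 0 .
lift_definition plus_cm :: "'a cm \<Rightarrow> 'a cm \<Rightarrow> 'a cm" is "(+)" .
lift_definition minus_cm :: "'a cm \<Rightarrow> 'a cm \<Rightarrow> 'a cm" is "(-)" .
lift_definition uminus_cm :: "'a cm \<Rightarrow> 'a cm" is "uminus" .
lift_definition scaleR_cm :: "real \<Rightarrow> 'a cm \<Rightarrow> 'a cm" is "scaleR" .
lift_definition norm_cm :: "'a cm \<Rightarrow> real" is "\<lambda>A. onorm (\<lambda>v. A *v v)" .
definition dist_cm :: "'a cm \<Rightarrow> 'a cm \<Rightarrow> real" where "dist_cm a b = norm (a - b)"
definition sgn_cm :: "'a cm \<Rightarrow> 'a cm" where "sgn_cm x = scaleR (inverse (norm x)) x"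
definition uniformity_cm :: "('a cm \<times> 'a cm) filter" where
  "uniformity_cm = (INF e\<in>{0 <..}. principal {(x, y). dist x y < e})"
definition open_cm :: "'a cm set \<Rightarrow> bool" where
  "open_cm S = (\<forall>x\<in>S. \<forall>\<^sub>F (x', y) in uniformity. x' = x \<longrightarrow> y \<in> S)"
instance
proof
  fix a b c :: "'a cm" and r s :: real
  show "a + b + c = a + (b + c)" by transfer (simp add: algebra_simps)
  show "a + b = b + a" by transfer (simp add: algebra_simps)
  show "0 + a = a" by transfer simp
  show "- a + a = 0" by transfer simp
  show "a - b = a + - b" by transfer simp
  show "r *\<^sub>R (a + b) = r *\<^sub>R a + r *\<^sub>R b" by transfer (simp add: scaleR_right_distrib)
  show "(r + s) *\<^sub>R a = r *\<^sub>R a + s *\<^sub>R a" by transfer (simp add: scaleR_left_distrib)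
  show "r *\<^sub>R s *\<^sub>R a = (r * s) *\<^sub>R a" by transfer simp
  show "1 *\<^sub>R a = a" by transfer simp
  show "dist a b = norm (a - b)" by (simp add: dist_cm_def)
  show "sgn a = inverse (norm a) *\<^sub>R a" by (simp add: sgn_cm_def)
  show "(uniformity :: ('a cm \<times> 'a cm) filter) = (INF e\<in>{0 <..}. principal {(x, y). dist x y < e})"
    by (simp add: uniformity_cm_def)
  show "open U = (\<forall>x\<in>U. \<forall>\<^sub>F (x', y) in uniformity. x' = x \<longrightarrow> y \<in> U)" for U :: "'a cm set"
    by (simp add: open_cm_def)
  show "(norm a = 0) = (a = 0)"
  proof transfer
    fix A :: "complex^'a^'n"
    have "onorm (\<lambda>v. A *v v) = 0 \<longleftrightarrow> (\<forall>v. A *v v = 0)"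
      using onorm_eq_0[OF bl_mv[of A]] by simp
    also have "\<dots> \<longleftrightarrow> A = 0"
    proof
      assume h: "\<forall>v. A *v v = 0"
      have "A $ i $ j = 0" for i j
      proof -
        have "(A *v axis j 1) $ i = 0" using h by simp
        then show ?thesis
          by (simp add: matrix_vector_mult_def axis_def if_distrib cong: if_cong)
      qed
      then show "A = 0" by (simp add: vec_eq_iff)
    qed simp
    finally show "(onorm (\<lambda>v. A *v v) = 0) = (A = 0)" .
  qed
  show "norm (a + b) \<le> norm a + norm b"
  proof transfer
    fix A B :: "complex^'a^'a"
    have "(\<lambda>v. (A + B) *v v) = (\<lambda>v. A *v v + B *v v)"
      by (simp add: matrix_vector_mult_add_rdistrib)
    then show "onorm (\<lambda>v. (A + B) *v v) \<le> onorm (\<lambda>v. A *v v) + onorm (\<lambda>v. B *v v)"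
      using onorm_triangle[OF bl_mv[of A] bl_mv[of B]] by simp
  qed
  show "norm (r *\<^sub>R a) = \<bar>r\<bar> * norm a"
    by transfer (rule onorm_scaleR_mat)
qed
end

lemma norm_cm_def': "norm x = onorm (\<lambda>v. Rep_cm x *v v)"
  by transfer simp

instantiation cm :: (finite) real_normed_algebra_1
begin
lift_definition times_cm :: "'a cm \<Rightarrow> 'a cm \<Rightarrow> 'a cm" is "(**)" .
lift_definition one_cm :: "'a cm" is "mat 1" .
instance
proof
  fix a b c :: "'a cm" and r :: real
  show "a * b * c = a * (b * c)" by transfer (simp add: matrix_mul_assoc)
  show "(a + b) * c = a * c + b * c" by transfer (simp add: vec_eq_iff matrix_matrix_mult_def distrib_right sum.distrib)
  show "a * (b + c) = a * b + a * c" by transfer (simp add: matrix_add_ldistrib)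
  show "1 * a = a" by transfer simp
  show "a * 1 = a" by transfer simp
  show "(0::'a cm) \<noteq> 1" 
  proof transfer
    obtain i :: 'a where True by simp
    have "(mat 1 :: complex^'a^'a) $ i $ i = 1" by (simp add: mat_def)
    then show "(0::complex^'a^'a) \<noteq> mat 1" by auto
  qed
  show "r *\<^sub>R a * b = r *\<^sub>R (a * b)"
    by transfer (simp add: vec_eq_iff matrix_matrix_mult_def scaleR_sum_right)
  show "a * r *\<^sub>R b = r *\<^sub>R (a * b)"
    by transfer (simp add: vec_eq_iff matrix_matrix_mult_def scaleR_sum_right)
  show "norm (1::'a cm) = 1"
    proof -
    have "(\<lambda>v. (mat 1::complex^'a^'a) *v v) = (\<lambda>v. v)" by simp
    then show ?thesis unfolding norm_cm_def' one_cm.rep_eq by (simp only: onorm_id)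
  qed
  show "norm (a * b) \<le> norm a * norm b"
  proof -
    have "(\<lambda>v. Rep_cm (a * b) *v v) = (\<lambda>v. Rep_cm a *v v) o (\<lambda>v. Rep_cm b *v v)"
      by (auto simp: times_cm.rep_eq matrix_vector_mul_assoc)
    then show ?thesis unfolding norm_cm_def'
      by (simp add: onorm_compose bl_mv)
  qed
qed
end

lemma norm_axis_c: "norm (axis j (c::complex) :: complex^'a) = norm c"
proof -
  have "\<And>i. (norm ((axis j c::complex^'a) $ i))^2 = (if i = j then (norm c)^2 else 0)"
    by (auto simp: axis_def)
  then show ?thesis unfolding norm_vec_def L2_set_def by simp
qed

lemma entry_le_onorm: "norm ((A::complex^'a^'a) $ i $ j) \<le> onorm (\<lambda>v. A *v v)"
proof -
  have "(A *v axis j 1) $ i = A $ i $ j"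
    by (simp add: matrix_vector_mult_def axis_def if_distrib cong: if_cong)
  then have "norm (A $ i $ j) \<le> norm (A *v axis j 1)" using Finite_Cartesian_Product.norm_nth_le[of "A *v axis j 1" i] by simp
  also have "\<dots> \<le> onorm (\<lambda>v. A *v v) * norm (axis j (1::complex) :: complex^'a)"
    by (rule onorm[OF bl_mv])
  finally show ?thesis by (simp add: norm_axis_c)
qed

lemma norm_vec_le_sum: "norm (x::'b::real_normed_vector^'a) \<le> (\<Sum>i\<in>UNIV. norm (x$i))"
  unfolding norm_vec_def by (rule L2_set_le_sum) simp

lemma bounded_linear_Rep_cm: "bounded_linear (Rep_cm :: 'a::finite cm \<Rightarrow> complex^'a^'a)"
proof
  fix x y :: "'a cm" and r :: real
  show "Rep_cm (x + y) = Rep_cm x + Rep_cm y" by transfer simp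
  show "Rep_cm (r *\<^sub>R x) = r *\<^sub>R Rep_cm x" by transfer simp
  show "\<exists>K. \<forall>x::'a cm. norm (Rep_cm x) \<le> norm x * K"
  proof (intro exI allI)
    fix x :: "'a cm"
    have "norm (Rep_cm x) \<le> (\<Sum>i\<in>UNIV. norm (Rep_cm x $ i))" by (rule norm_vec_le_sum)
    also have "\<dots> \<le> (\<Sum>i\<in>(UNIV::'a set). \<Sum>j\<in>(UNIV::'a set). norm x)"
      by (intro sum_mono order_trans[OF norm_vec_le_sum]) (simp add: norm_cm_def' entry_le_onorm)
    finally show "norm (Rep_cm x) \<le> norm x * (real CARD('a) * real CARD('a))" by (simp add: mult.commute mult.left_commute)
  qed
qed

lemma bounded_linear_Abs_cm: "bounded_linear (Abs_cm :: complex^'a^'a \<Rightarrow> 'a::finite cm)"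
proof
  fix x y :: "complex^'a^'a" and r :: real
  show "Abs_cm (x + y) = Abs_cm x + Abs_cm y" by transfer simp
  show "Abs_cm (r *\<^sub>R x) = r *\<^sub>R Abs_cm x" by transfer simp
  have "bilinear (\<lambda>(A::complex^'a^'a) (v::complex^'a). A *v v)"
    unfolding bilinear_def
    by (auto intro!: linearI simp: matrix_vector_mult_add_rdistrib matrix_vector_right_distrib
        vec_eq_iff matrix_vector_mult_def scaleR_sum_right distrib_right sum.distrib)
  then have "bounded_bilinear (\<lambda>(A::complex^'a^'a) (v::complex^'a). A *v v)"
    using bilinear_conv_bounded_bilinear by blast
  then obtain K where K: "\<And>A v. norm ((A::complex^'a^'a) *v (v::complex^'a)) \<le> norm A * norm v * K"
    and Kp: "K > 0"
    using bounded_bilinear.pos_bounded by blast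
  have "norm (Abs_cm x) \<le> norm x * K" for x :: "complex^'a^'a"
  proof -
    have "onorm (\<lambda>v. x *v v) \<le> norm x * K"
      by (rule onorm_bound) (use K Kp in \<open>auto simp: mult.commute mult.left_commute\<close>)
    then show ?thesis
      by (simp add: norm_cm_def' Abs_cm_inverse)
  qed
  then show "\<exists>K. \<forall>x::complex^'a^'a. norm (Abs_cm x) \<le> norm x * K" by metis
qed

instance cm :: (finite) banach
proof
  fix X :: "nat \<Rightarrow> 'a cm"
  assume "Cauchy X"
  then have "Cauchy (\<lambda>n. Rep_cm (X n))" by (rule bounded_linear.Cauchy[OF bounded_linear_Rep_cm])
  then obtain L where "(\<lambda>n. Rep_cm (X n)) \<longlonglongrightarrow> L" using convergent_eq_Cauchy by blast
  then have "(\<lambda>n. Abs_cm (Rep_cm (X n))) \<longlonglongrightarrow> Abs_cm L"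
    by (rule bounded_linear.tendsto[OF bounded_linear_Abs_cm])
  then show "convergent X" by (auto simp: Rep_cm_inverse convergent_def)
qed


lemma exp_commute:
  fixes x y :: "'b::{real_normed_algebra_1,banach}"
  assumes "x * y = y * x"
  shows "exp x * y = y * exp x"
proof -
  have c: "x ^ n * y = y * x ^ n" for n
    using power_commuting_commutes[OF assms, of n] by simp
  show ?thesis
    unfolding exp_def
    by (simp add: suminf_mult2[OF summable_exp_generic] suminf_mult[OF summable_exp_generic, symmetric] c)
qed

lemma exp_conj:
  fixes p q x :: "'b::{real_normed_algebra_1,banach}"
  assumes "q * p = 1" "p * q = 1"
  shows "exp (p * x * q) = p * exp x * q"
proof -
  have pw: "(p * x * q) ^ Suc n = p * x ^ Suc n * q" for n
  proof (induction n)
    case 0 then show ?case by simp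
  next
    case (Suc n)
    have "(p * x * q) ^ Suc (Suc n) = (p * x * q) * (p * x ^ Suc n * q)"
      using Suc by simp
    also have "\<dots> = p * x * (q * p) * x ^ Suc n * q" by (simp add: mult.assoc)
    also have "\<dots> = p * x ^ Suc (Suc n) * q" using assms by (simp add: mult.assoc)
    finally show ?case .
  qed
  have pw': "(p * x * q) ^ n /\<^sub>R fact n = p * (x ^ n /\<^sub>R fact n) * q" for n
  proof (cases n)
    case 0 then show ?thesis using assms by (simp add: mult.assoc)
  next
    case (Suc m) then show ?thesis using pw[of m] by simp
  qed
  have s: "summable (\<lambda>n. x ^ n /\<^sub>R fact n)" by (rule summable_exp_generic)
  have s2: "summable (\<lambda>n. p * (x ^ n /\<^sub>R fact n))" by (rule summable_mult[OF s])
  have "(\<Sum>n. (p * x * q) ^ n /\<^sub>R fact n) = (\<Sum>n. p * (x ^ n /\<^sub>R fact n) * q)"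
    by (simp only: pw')
  also have "\<dots> = (\<Sum>n. p * (x ^ n /\<^sub>R fact n)) * q"
    by (rule suminf_mult2[OF s2, symmetric])
  also have "\<dots> = p * (\<Sum>n. x ^ n /\<^sub>R fact n) * q"
    by (simp only: suminf_mult[OF s])
  finally show ?thesis by (simp only: exp_def)
qed

lemma exp_neg_inv:
  fixes x :: "'b::{real_normed_algebra_1,banach}"
  shows "exp (- x) * exp x = 1"
  using exp_minus_inverse[of "- x"] by simp

lemma rotation:
  fixes k x y :: "'b::{real_normed_algebra_1,banach}"
  assumes kx: "k * x - x * k = y" and ky: "k * y - y * k = - x"
  shows "exp (a *\<^sub>R k) * x * exp (- (a *\<^sub>R k)) = cos a *\<^sub>R x + sin a *\<^sub>R y"
proof -
  define g where "g a = cos a *\<^sub>R x + sin a *\<^sub>R y" for a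
  define F where "F a = exp (a *\<^sub>R (- k)) * g a * exp (a *\<^sub>R k)" for a
  have dF: "(F has_vector_derivative 0) (at a within UNIV)" for a
  proof -
    have dg: "(g has_vector_derivative (- sin a *\<^sub>R x + cos a *\<^sub>R y)) (at a)"
      unfolding g_def by (auto intro!: derivative_eq_intros)
    have d1: "((\<lambda>a. exp (a *\<^sub>R (- k))) has_vector_derivative exp (a *\<^sub>R (- k)) * (- k)) (at a)"
      by (rule exp_scaleR_has_vector_derivative_right)
    have d2: "((\<lambda>a. exp (a *\<^sub>R k)) has_vector_derivative exp (a *\<^sub>R k) * k) (at a)"
      by (rule exp_scaleR_has_vector_derivative_right)
    have "(F has_vector_derivative
        (exp (a *\<^sub>R (- k)) * g a * (exp (a *\<^sub>R k) * k) +
         (exp (a *\<^sub>R (- k)) * (- sin a *\<^sub>R x + cos a *\<^sub>R y) + exp (a *\<^sub>R (- k)) * (- k) * g a) * exp (a *\<^sub>R k))) (at a)"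
      unfolding F_def
      by (intro has_vector_derivative_mult d1 d2 dg)
    moreover have "exp (a *\<^sub>R k) * k = k * exp (a *\<^sub>R k)"
      by (rule exp_commute) (simp add: scaleR_left_commute)
    moreover have "g a * k - k * g a + (- sin a *\<^sub>R x + cos a *\<^sub>R y) = 0"
    proof -
      have "g a * k - k * g a = - (cos a *\<^sub>R (k * x - x * k) + sin a *\<^sub>R (k * y - y * k))"
        unfolding g_def by (simp add: algebra_simps)
      then show ?thesis using kx ky by (simp add: algebra_simps)
    qed
    ultimately show ?thesis
    proof -
      assume h: "(F has_vector_derivative
        (exp (a *\<^sub>R (- k)) * g a * (exp (a *\<^sub>R k) * k) +
         (exp (a *\<^sub>R (- k)) * (- sin a *\<^sub>R x + cos a *\<^sub>R y) + exp (a *\<^sub>R (- k)) * (- k) * g a) * exp (a *\<^sub>R k))) (at a)"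
        and c: "exp (a *\<^sub>R k) * k = k * exp (a *\<^sub>R k)"
        and z: "g a * k - k * g a + (- sin a *\<^sub>R x + cos a *\<^sub>R y) = 0"
      have "exp (a *\<^sub>R (- k)) * g a * (exp (a *\<^sub>R k) * k) +
         (exp (a *\<^sub>R (- k)) * (- sin a *\<^sub>R x + cos a *\<^sub>R y) + exp (a *\<^sub>R (- k)) * (- k) * g a) * exp (a *\<^sub>R k)
        = exp (a *\<^sub>R (- k)) * (g a * k - k * g a + (- sin a *\<^sub>R x + cos a *\<^sub>R y)) * exp (a *\<^sub>R k)"
        using c by (simp add: algebra_simps mult.assoc)
      with h z show ?thesis by simp
    qed
  qed
  obtain c where c: "\<And>a. a \<in> UNIV \<Longrightarrow> F a = c"
    using has_vector_derivative_zero_constant[of UNIV F] dF by blast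
  have "F a = F 0" using c by simp
  also have "F 0 = x" by (simp add: F_def g_def)
  finally have Fa: "F a = x" .
  have inv1: "exp (a *\<^sub>R k) * exp (a *\<^sub>R (- k)) = 1"
    using exp_minus_inverse[of "a *\<^sub>R k"] by simp
  have inv2: "exp (a *\<^sub>R k) * exp (- (a *\<^sub>R k)) = 1"
    using exp_minus_inverse[of "a *\<^sub>R k"] by simp
  have "exp (a *\<^sub>R k) * x * exp (- (a *\<^sub>R k)) = exp (a *\<^sub>R k) * F a * exp (- (a *\<^sub>R k))"
    using Fa by simp
  also have "\<dots> = (exp (a *\<^sub>R k) * exp (a *\<^sub>R (- k))) * g a * (exp (a *\<^sub>R k) * exp (- (a *\<^sub>R k)))"
    by (simp add: F_def mult.assoc)
  also have "\<dots> = g a" using inv1 inv2 by simp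
  finally show ?thesis by (simp add: g_def)
qed


lemma Rep_mult: "Rep_cm (x * y) = Rep_cm x ** Rep_cm y" by transfer simp
lemma Rep_add: "Rep_cm (x + y) = Rep_cm x + Rep_cm y" by transfer simp
lemma Rep_diff: "Rep_cm (x - y) = Rep_cm x - Rep_cm y" by transfer simp
lemma Rep_uminus: "Rep_cm (- x) = - Rep_cm x" by transfer simp
lemma Rep_scaleR: "Rep_cm (r *\<^sub>R x) = r *\<^sub>R Rep_cm x" by transfer simp
lemma Rep_one: "Rep_cm 1 = mat 1" by transfer simp
lemma Rep_zero: "Rep_cm 0 = 0" by transfer simp
lemmas Rep_simps = Rep_mult Rep_add Rep_diff Rep_uminus Rep_scaleR Rep_one Rep_zero Abs_cm_inverse[OF UNIV_I] Rep_cm_inverse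

lemma cm_eqI: "Rep_cm x = Rep_cm y \<Longrightarrow> x = y" by (simp add: Rep_cm_inject)

definition cs :: "complex \<Rightarrow> 'a::finite cm" where "cs c = Abs_cm (mat c)"

lemma mat_mult_entry: "(mat c ** A) $ i $ j = c * (A::'b::comm_ring_1^'p^'n) $ i $ j"
proof -
  have e: "\<And>k. (if i = k then c else 0) * A$k$j = (if i = k then c * A$k$j else 0)" by simp
  show ?thesis unfolding matrix_matrix_mult_def mat_def by (simp add: e sum.delta)
qed
lemma mult_mat_entry: "(A ** mat c) $ i $ j = (A::'b::comm_ring_1^'n^'p) $ i $ j * c"
proof -
  have e: "\<And>k. A$i$k * (if k = j then c else 0) = (if k = j then A$i$k * c else 0)" by simp
  show ?thesis unfolding matrix_matrix_mult_def mat_def by (simp add: e sum.delta)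
qed
lemma cscale_mat: "cscale c A = mat c ** A"
  by (simp add: cscale_def vec_eq_iff mat_mult_entry)

lemma Rep_cs: "Rep_cm (cs c :: 'a::finite cm) = mat c" by (simp add: cs_def Abs_cm_inverse)

lemma Abs_cscale: "Abs_cm (cscale c A) = cs c * Abs_cm A"
  by (simp add: cscale_mat cs_def times_cm.abs_eq)

lemma Rep_cs_mult: "Rep_cm (cs c * x) = cscale c (Rep_cm x)"
  by (simp add: Rep_mult Rep_cs cscale_mat)

lemma cs_central: "cs c * x = x * cs c"
proof -
  have "mat c ** Rep_cm x = Rep_cm x ** mat c"
    by (simp add: vec_eq_iff mat_mult_entry mult_mat_entry mult.commute)
  then show ?thesis by (metis Rep_cm_inject Rep_cs Rep_mult)
qed

lemma cs_mult: "cs c * cs d = cs (c * d)"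
  by (rule cm_eqI) (simp add: Rep_mult Rep_cs vec_eq_iff mat_mult_entry, simp add: mat_def)

lemma cs_add: "cs (c + d) = cs c + cs d"
  by (rule cm_eqI) (simp add: Rep_add Rep_cs vec_eq_iff mat_def)

lemma cs_uminus: "cs (- c) = - cs c"
  by (rule cm_eqI) (simp add: Rep_uminus Rep_cs vec_eq_iff mat_def)

lemma cs_of_real: "cs (of_real r) = r *\<^sub>R (1 :: 'a::finite cm)"
  by (rule cm_eqI) (auto simp: Rep_scaleR Rep_one Rep_cs vec_eq_iff mat_def complex_eq_iff)

lemma cs_one: "cs 1 = 1" by (simp add: cs_def one_cm.abs_eq)

lemma cs_scaleR_mult: "cs (of_real r) * x = r *\<^sub>R x"
  by (simp add: cs_of_real)

lemma Abs_scaleR: "Abs_cm (r *\<^sub>R A) = r *\<^sub>R Abs_cm A" by (simp add: scaleR_cm.abs_eq)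
lemma Abs_mult: "Abs_cm (A ** B) = Abs_cm A * Abs_cm B" by (simp add: times_cm.abs_eq)
lemma Abs_add: "Abs_cm (A + B) = Abs_cm A + Abs_cm B" by (simp add: plus_cm.abs_eq)

lemma mpow_Suc: "mpow M (Suc k) = M ** mpow M k" by (simp add: mpow_def)
lemma mpow_0: "mpow M 0 = mat 1" by (simp add: mpow_def)

lemma Rep_power: "Rep_cm (Abs_cm M ^ k) = mpow M k"
  by (induction k) (simp_all add: mpow_Suc mpow_0 Rep_mult Rep_one Abs_cm_inverse)

lemma mexp_cm: "mexp M = Rep_cm (exp (Abs_cm M))"
proof -
  have "(\<lambda>n. Abs_cm M ^ n /\<^sub>R fact n) sums exp (Abs_cm M)"
    unfolding exp_def by (rule summable_sums[OF summable_exp_generic])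
  from bounded_linear.sums[OF bounded_linear_Rep_cm this]
  have "(\<lambda>n. (1 / fact n) *\<^sub>R mpow M n) sums Rep_cm (exp (Abs_cm M))"
    by (simp add: Rep_scaleR Rep_power divide_inverse_commute)
  then show ?thesis unfolding mexp_def by (rule sums_unique[symmetric])
qed

definition adjc :: "'a::finite cm \<Rightarrow> 'a cm" where "adjc x = Abs_cm (cadj (Rep_cm x))"

lemma cadj_mult: "cadj (A ** B) = cadj B ** (cadj A :: complex^'a::finite^'a)"
  by (simp add: cadj_def vec_eq_iff matrix_matrix_mult_def mult.commute)

lemma Rep_adjc: "Rep_cm (adjc x) = cadj (Rep_cm x)"
  by (simp add: adjc_def Abs_cm_inverse)

lemma adjc_mult: "adjc (x * y) = adjc y * adjc x"
  by (simp add: adjc_def Rep_mult cadj_mult Abs_mult)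

lemma adjc_add: "adjc (x + y) = adjc x + adjc y"
  by (rule cm_eqI) (simp add: Rep_adjc Rep_add cadj_def vec_eq_iff)

lemma adjc_scaleR: "adjc (r *\<^sub>R x) = r *\<^sub>R adjc x"
  by (rule cm_eqI) (simp add: Rep_adjc Rep_scaleR cadj_def vec_eq_iff)

lemma adjc_uminus: "adjc (- x) = - adjc x"
  by (rule cm_eqI) (simp add: Rep_adjc Rep_uminus cadj_def vec_eq_iff)

lemma adjc_cs: "adjc (cs c) = cs (cnj c)"
  by (rule cm_eqI) (simp add: Rep_adjc Rep_cs cadj_def vec_eq_iff mat_def)

lemma adjc_one: "adjc 1 = 1"
  using adjc_cs[of 1] by (simp add: cs_one)

lemma adjc_power: "adjc (x ^ n) = adjc x ^ n"
proof (induction n)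
  case 0 then show ?case by (simp add: adjc_one)
next
  case (Suc n)
  have "adjc (x ^ Suc n) = adjc (x ^ n * x)" by (simp only: power_Suc2)
  also have "\<dots> = adjc x * adjc (x ^ n)" by (simp only: adjc_mult)
  also have "\<dots> = adjc x ^ Suc n" using Suc by (simp only: power_Suc)
  finally show ?case .
qed

lemma bounded_linear_adjc: "bounded_linear (adjc :: 'a::finite cm \<Rightarrow> 'a cm)"
proof -
  have "linear (cadj :: complex^'a^'a \<Rightarrow> complex^'a^'a)"
    by (rule linearI) (simp_all add: cadj_def vec_eq_iff)
  then have bl: "bounded_linear (cadj :: complex^'a^'a \<Rightarrow> complex^'a^'a)"
    using linear_conv_bounded_linear by blast
  have "bounded_linear (\<lambda>x::'a cm. Abs_cm (cadj (Rep_cm x)))"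
    by (intro bounded_linear_compose[OF bounded_linear_Abs_cm] bounded_linear_compose[OF bl] bounded_linear_Rep_cm)
  then show ?thesis by (simp add: adjc_def[abs_def])
qed

lemma adjc_exp: "adjc (exp x) = exp (adjc x)"
proof -
  have "adjc (exp x) = (\<Sum>n. adjc (x ^ n /\<^sub>R fact n))"
    unfolding exp_def by (rule bounded_linear.suminf[OF bounded_linear_adjc summable_exp_generic])
  then show ?thesis by (simp add: adjc_scaleR adjc_power exp_def)
qed

lemma cadj_Rep: "cadj (Rep_cm x) = Rep_cm (adjc x)"
  by (simp add: adjc_def Abs_cm_inverse)


abbreviation II :: "'a::finite cm" where "II \<equiv> cs \<i>"

lemma II_sq: "II * II = -1"
  by (simp add: cs_mult cs_uminus cs_one)

lemma II_comm: "II * w = w * II" by (rule cs_central)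

lemma II_left: "w * (II * v) = II * (w * v)"
  by (metis II_comm mult.assoc)

lemma II_II: "II * (II * v) = - v"
  by (metis II_sq mult.assoc mult_minus_left mult_1)

lemma II_adj: "adjc II = - II"
  by (simp add: adjc_cs cs_uminus)

locale su2 =
  fixes x y z :: "'a::finite cm"
  assumes c1: "x * y - y * x = II * z"
    and c2: "y * z - z * y = II * x"
    and c3: "z * x - x * z = II * y"
    and hx: "adjc x = x" and hy: "adjc y = y" and hz: "adjc z = z"
begin

definition ky where "ky = II * y"
definition kx where "kx = II * x"

lemma ky_x: "ky * x - x * ky = z"
proof -
  have "ky * x - x * ky = II * (y * x - x * y)"
    by (simp add: ky_def II_left mult.assoc right_diff_distrib)
  also have "y * x - x * y = - (II * z)" using c1 by (simp add: algebra_simps)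
  finally show ?thesis by (simp add: II_II)
qed

lemma ky_z: "ky * z - z * ky = - x"
proof -
  have "ky * z - z * ky = II * (y * z - z * y)"
    by (simp add: ky_def II_left mult.assoc right_diff_distrib)
  then show ?thesis using c2 by (simp add: II_II)
qed

lemma ky_negx: "ky * (- x) - (- x) * ky = - z"
  using ky_x by (simp add: algebra_simps)

lemma kx_y: "kx * y - y * kx = - z"
proof -
  have "kx * y - y * kx = II * (x * y - y * x)"
    by (simp add: kx_def II_left mult.assoc right_diff_distrib)
  then show ?thesis using c1 by (simp add: II_II)
qed

lemma kx_negz: "kx * (- z) - (- z) * kx = - y"
proof -
  have "kx * (- z) - (- z) * kx = - (II * (x * z - z * x))"
    by (simp add: kx_def II_left mult.assoc right_diff_distrib)
  also have "x * z - z * x = - (II * y)" using c3 by (simp add: algebra_simps)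
  finally show ?thesis by (simp add: II_II)
qed

lemma rot_x: "exp (a *\<^sub>R ky) * x * exp (- (a *\<^sub>R ky)) = cos a *\<^sub>R x + sin a *\<^sub>R z"
  by (rule rotation[OF ky_x ky_z])

lemma rot_z: "exp (a *\<^sub>R ky) * z * exp (- (a *\<^sub>R ky)) = cos a *\<^sub>R z + sin a *\<^sub>R (- x)"
  by (rule rotation[OF ky_z ky_negx])

lemma rot_y: "exp (a *\<^sub>R kx) * y * exp (- (a *\<^sub>R kx)) = cos a *\<^sub>R y + sin a *\<^sub>R (- z)"
  by (rule rotation[OF kx_y kx_negz])

lemma ky_y: "exp (a *\<^sub>R ky) * y = y * exp (a *\<^sub>R ky)"
  by (rule exp_commute) (simp add: ky_def II_left mult.assoc)

lemma adj_ky: "adjc ky = - ky"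
  by (simp add: ky_def adjc_mult hy II_adj II_comm)

lemma adj_kx: "adjc kx = - kx"
  by (simp add: kx_def adjc_mult hx II_adj II_comm)


definition Rp where "Rp th = exp (th *\<^sub>R ky)"
definition Rm where "Rm th = exp (- (th *\<^sub>R ky))"
definition ath where "ath th = cos th *\<^sub>R x + sin th *\<^sub>R z"

lemma Rm_Rp: "Rm th * Rp th = 1" by (simp add: Rm_def Rp_def exp_neg_inv)
lemma Rp_Rm: "Rp th * Rm th = 1" by (simp add: Rm_def Rp_def exp_minus_inverse)
lemma Rm_Rp': "Rm th * (Rp th * w) = w" by (simp add: mult.assoc[symmetric] Rm_Rp)
lemma Rp_Rm': "Rp th * (Rm th * w) = w" by (simp add: mult.assoc[symmetric] Rp_Rm)

lemma ath_rot: "ath th = Rp th * x * Rm th"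
  by (simp add: ath_def Rp_def Rm_def rot_x)

lemma u_decomp: "exp (c *\<^sub>R (II * ath th)) = Rp th * exp (c *\<^sub>R kx) * Rm th"
proof -
  have e: "c *\<^sub>R (II * ath th) = Rp th * (c *\<^sub>R kx) * Rm th"
    by (simp add: ath_rot kx_def II_left mult.assoc)
  show ?thesis unfolding e by (rule exp_conj[OF Rm_Rp Rp_Rm])
qed

lemma adj_Rp: "adjc (Rp th) = Rm th"
  by (simp add: Rp_def Rm_def adjc_exp adjc_scaleR adj_ky)

lemma adj_Rm: "adjc (Rm th) = Rp th"
  by (simp add: Rp_def Rm_def adjc_exp adjc_scaleR adjc_uminus adj_ky)

lemma adj_U: "adjc (Rp th * exp (c *\<^sub>R kx) * Rm th) = Rp th * exp ((- c) *\<^sub>R kx) * Rm th"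
  by (simp add: adjc_mult adj_Rp adj_Rm adjc_exp adjc_scaleR adj_kx mult.assoc)


lemma ky_Rm: "ky * Rm th = Rm th * ky"
  unfolding Rm_def by (rule exp_commute[symmetric]) (simp add: algebra_simps)
lemma ky_Rp: "ky * Rp th = Rp th * ky"
  unfolding Rp_def by (rule exp_commute[symmetric]) (simp add: algebra_simps)
lemma ky_Rp': "ky * (Rp th * w) = Rp th * (ky * w)"
  by (simp add: mult.assoc[symmetric] ky_Rp)

lemma CE: "exp (B *\<^sub>R m) * exp ((- B) *\<^sub>R m) = 1"
  using exp_minus_inverse[of "B *\<^sub>R m"] by simp
lemma CE': "exp (B *\<^sub>R m) * (exp ((- B) *\<^sub>R m) * w) = w"
  by (metis CE mult.assoc mult_1)
lemma mE: "m * exp (c *\<^sub>R m) = exp (c *\<^sub>R m) * m"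
  by (rule exp_commute[symmetric]) (simp add: algebra_simps)
lemma mE': "m * (exp (c *\<^sub>R m) * w) = exp (c *\<^sub>R m) * (m * w)"
  by (simp add: mult.assoc[symmetric] mE)

lemma dB: "((\<lambda>b. Rp th * exp (b *\<^sub>R m) * Rm th) has_vector_derivative
    (Rp th * (exp (B *\<^sub>R m) * m) * Rm th)) (at B)"
proof -
  have "((\<lambda>b. Rp th * exp (b *\<^sub>R m) * Rm th) has_vector_derivative
    (Rp th * exp (B *\<^sub>R m) * 0 + (Rp th * (exp (B *\<^sub>R m) * m) + 0 * exp (B *\<^sub>R m)) * Rm th)) (at B)"
    by (intro has_vector_derivative_mult has_vector_derivative_const exp_scaleR_has_vector_derivative_right)
  then show ?thesis by simp
qed

lemma dth: "((\<lambda>s. Rp s * C * Rm s) has_vector_derivative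
    (Rp th * ky * C * Rm th - Rp th * C * Rm th * ky)) (at th)"
proof -
  have d1: "((\<lambda>s. Rp s) has_vector_derivative Rp th * ky) (at th)"
    unfolding Rp_def by (rule exp_scaleR_has_vector_derivative_right)
  have d2: "((\<lambda>s. Rm s) has_vector_derivative Rm th * (- ky)) (at th)"
    unfolding Rm_def using exp_scaleR_has_vector_derivative_right[of "- ky" th UNIV] by simp
  have "((\<lambda>s. Rp s * C * Rm s) has_vector_derivative
    (Rp th * C * (Rm th * (- ky)) + (Rp th * 0 + Rp th * ky * C) * Rm th)) (at th)"
    by (intro has_vector_derivative_mult has_vector_derivative_const d1 d2)
  then show ?thesis by (simp add: algebra_simps)
qed

lemma gen1: "II * (Rp th * (exp (B *\<^sub>R (t *\<^sub>R kx)) * (t *\<^sub>R kx)) * Rm th)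
    * (Rp th * exp ((- B) *\<^sub>R (t *\<^sub>R kx)) * Rm th) = - (t *\<^sub>R ath th)"
proof -
  have "II * (Rp th * (exp (B *\<^sub>R (t *\<^sub>R kx)) * (t *\<^sub>R kx)) * Rm th)
    * (Rp th * exp ((- B) *\<^sub>R (t *\<^sub>R kx)) * Rm th)
    = II * (Rp th * ((t *\<^sub>R kx) * Rm th))"
    by (simp only: mult.assoc Rm_Rp' mE' CE')
  also have "\<dots> = - (t *\<^sub>R (Rp th * (x * Rm th)))"
    by (simp add: kx_def mult.assoc II_left[of "Rp th"] II_II)
  finally show ?thesis by (simp add: ath_rot mult.assoc)
qed

lemma gen2: "II * (Rp th * ky * exp (B *\<^sub>R (t *\<^sub>R kx)) * Rm th
       - Rp th * exp (B *\<^sub>R (t *\<^sub>R kx)) * Rm th * ky)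
    * (Rp th * exp ((- B) *\<^sub>R (t *\<^sub>R kx)) * Rm th)
    = - y + cos (B * t) *\<^sub>R y - sin (B * t) *\<^sub>R (cos th *\<^sub>R z - sin th *\<^sub>R x)"
proof -
  let ?C = "exp (B *\<^sub>R (t *\<^sub>R kx))" and ?E = "exp ((- B) *\<^sub>R (t *\<^sub>R kx))"
  have CE2: "?C * (?E * w) = w" for w by (rule CE')
  have t1: "II * (Rp th * ky * ?C * Rm th) * (Rp th * ?E * Rm th) = - y"
  proof -
    have "II * (Rp th * ky * ?C * Rm th) * (Rp th * ?E * Rm th) = II * (Rp th * (ky * Rm th))"
      by (simp only: mult.assoc Rm_Rp' CE2)
    also have "\<dots> = II * ky" by (simp only: ky_Rm Rp_Rm')
    finally show ?thesis by (simp add: ky_def II_II)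
  qed
  have t2: "II * (Rp th * ?C * Rm th * ky) * (Rp th * ?E * Rm th) = - (Rp th * (?C * y * ?E) * Rm th)"
  proof -
    have "II * (Rp th * ?C * Rm th * ky) * (Rp th * ?E * Rm th) = II * (Rp th * (?C * (ky * (?E * Rm th))))"
      by (simp only: mult.assoc ky_Rp' Rm_Rp')
    also have "\<dots> = - (Rp th * (?C * (y * (?E * Rm th))))"
      by (simp add: ky_def mult.assoc II_left[of "Rp th"] II_left[of "exp ((B * t) *\<^sub>R kx)"] II_II)
    finally show ?thesis by (simp add: mult.assoc)
  qed
  have Cy: "?C * y * ?E = cos (B * t) *\<^sub>R y + sin (B * t) *\<^sub>R (- z)"
    using rot_y[of "B * t"] by simp
  have Ry: "Rp th * y * Rm th = y"
    by (metis Rp_def Rp_Rm ky_y mult.assoc mult_1_right)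
  have Rz: "Rp th * z * Rm th = cos th *\<^sub>R z + sin th *\<^sub>R (- x)"
    by (simp add: Rp_def Rm_def rot_z)
  have "Rp th * (?C * y * ?E) * Rm th = cos (B * t) *\<^sub>R (Rp th * y * Rm th) - sin (B * t) *\<^sub>R (Rp th * z * Rm th)"
    unfolding Cy by (simp add: algebra_simps)
  also have "\<dots> = cos (B * t) *\<^sub>R y - sin (B * t) *\<^sub>R (cos th *\<^sub>R z - sin th *\<^sub>R x)"
    unfolding Ry Rz by simp
  finally have t3: "Rp th * (?C * y * ?E) * Rm th = cos (B * t) *\<^sub>R y - sin (B * t) *\<^sub>R (cos th *\<^sub>R z - sin th *\<^sub>R x)" .
  have "II * (Rp th * ky * ?C * Rm th - Rp th * ?C * Rm th * ky) * (Rp th * ?E * Rm th)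
     = II * (Rp th * ky * ?C * Rm th) * (Rp th * ?E * Rm th) - II * (Rp th * ?C * Rm th * ky) * (Rp th * ?E * Rm th)"
    by (simp add: algebra_simps)
  also have "\<dots> = - y + Rp th * (?C * y * ?E) * Rm th" unfolding t1 t2 by simp
  finally show ?thesis unfolding t3 by simp
qed

end


lemma cscale_real: "cscale (of_real r) A = r *\<^sub>R A"
proof -
  have e: "\<And>i j. of_real r * A$i$j = r *\<^sub>R (A$i$j)" by (simp add: scaleR_conv_of_real)
  show ?thesis by (simp add: cscale_def vec_eq_iff e)
qed

lemma Abs_diff: "Abs_cm (A - B) = Abs_cm A - Abs_cm B" by (simp add: minus_cm.abs_eq)

lemma Abs_comm: "Abs_cm (comm A B) = Abs_cm A * Abs_cm B - Abs_cm B * Abs_cm A"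
  by (simp add: comm_def Abs_diff Abs_mult)

lemma herm_adj: "hermitian A \<Longrightarrow> adjc (Abs_cm A) = Abs_cm A"
  by (simp add: hermitian_def adjc_def Abs_cm_inverse)

lemma cs_mit: "cs (- \<i> * of_real t) = (- t) *\<^sub>R (II :: 'a::finite cm)"
proof -
  have e: "- \<i> * of_real t = of_real (- t) * \<i>" by simp
  have "cs (- \<i> * of_real t) = cs (of_real (- t)) * (II :: 'a cm)"
    by (simp only: e cs_mult)
  then show ?thesis by (simp only: cs_of_real mult_scaleR_left mult_1_left)
qed

lemma cs_mit': "cs (- (\<i> * of_real t)) = (- t) *\<^sub>R (II :: 'a::finite cm)"
  using cs_mit[of t] by simp

locale su2mat =
  fixes Jx Jy Jz :: "complex^'a::finite^'a"
  assumes hJx: "hermitian Jx" and hJy: "hermitian Jy" and hJz: "hermitian Jz"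
    and s1: "comm Jx Jy = cscale \<i> Jz" and s2: "comm Jy Jz = cscale \<i> Jx"
    and s3: "comm Jz Jx = cscale \<i> Jy"

sublocale su2mat \<subseteq> su2 "Abs_cm Jx" "Abs_cm Jy" "Abs_cm Jz"
proof
  show "Abs_cm Jx * Abs_cm Jy - Abs_cm Jy * Abs_cm Jx = II * Abs_cm Jz"
    using arg_cong[OF s1, of Abs_cm] by (simp add: Abs_comm Abs_cscale)
  show "Abs_cm Jy * Abs_cm Jz - Abs_cm Jz * Abs_cm Jy = II * Abs_cm Jx"
    using arg_cong[OF s2, of Abs_cm] by (simp add: Abs_comm Abs_cscale)
  show "Abs_cm Jz * Abs_cm Jx - Abs_cm Jx * Abs_cm Jz = II * Abs_cm Jy"
    using arg_cong[OF s3, of Abs_cm] by (simp add: Abs_comm Abs_cscale)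
  show "adjc (Abs_cm Jx) = Abs_cm Jx" "adjc (Abs_cm Jy) = Abs_cm Jy" "adjc (Abs_cm Jz) = Abs_cm Jz"
    using hJx hJy hJz by (simp_all add: herm_adj)
qed

context su2mat
begin

lemma Uop_eq: "Uop Jx Jz t B th = Rep_cm (Rp th * exp ((- B) *\<^sub>R (t *\<^sub>R kx)) * Rm th)"
proof -
  have "Abs_cm (cscale (- \<i> * of_real t) (Ham Jx Jz B th)) = (- (t * B)) *\<^sub>R (II * ath th)"
    unfolding Ham_def by (simp add: Abs_cscale Abs_add cs_mit' cs_scaleR_mult ath_def algebra_simps)
  then have "Uop Jx Jz t B th = Rep_cm (exp ((- (t * B)) *\<^sub>R (II * ath th)))"
    by (simp add: Uop_def mexp_cm)
  also have "\<dots> = Rep_cm (Rp th * exp ((- (t * B)) *\<^sub>R kx) * Rm th)"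
    by (simp only: u_decomp)
  finally show ?thesis by (simp add: mult.commute)
qed

lemma Uadj_eq: "cadj (Uop Jx Jz t b th) = Rep_cm (Rp th * exp (b *\<^sub>R (t *\<^sub>R kx)) * Rm th)"
proof -
  have "cadj (Uop Jx Jz t b th) = Rep_cm (adjc (Rp th * exp (((- b) * t) *\<^sub>R kx) * Rm th))"
    by (simp add: Uop_eq cadj_Rep)
  also have "\<dots> = Rep_cm (Rp th * exp ((- ((- b) * t)) *\<^sub>R kx) * Rm th)"
    by (simp only: adj_U)
  finally show ?thesis by simp
qed

lemma gen1_eq: "gen Jx Jz t B th 1 = Rep_cm (- (t *\<^sub>R ath th))"
proof -
  have f: "(\<lambda>b. cadj (Uop Jx Jz t b th)) = (\<lambda>b. Rep_cm (Rp th * exp (b *\<^sub>R (t *\<^sub>R kx)) * Rm th))"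
    by (simp add: Uadj_eq)
  have "((\<lambda>b. Rep_cm (Rp th * exp (b *\<^sub>R (t *\<^sub>R kx)) * Rm th)) has_vector_derivative
      Rep_cm (Rp th * (exp (B *\<^sub>R (t *\<^sub>R kx)) * (t *\<^sub>R kx)) * Rm th)) (at B)"
    by (rule bounded_linear.has_vector_derivative[OF bounded_linear_Rep_cm dB])
  then have vd: "vector_derivative (\<lambda>b. cadj (Uop Jx Jz t b th)) (at B)
      = Rep_cm (Rp th * (exp (B *\<^sub>R (t *\<^sub>R kx)) * (t *\<^sub>R kx)) * Rm th)"
    unfolding f by (rule vector_derivative_at)
  have "gen Jx Jz t B th 1 = cscale \<i> (vector_derivative (\<lambda>b. cadj (Uop Jx Jz t b th)) (at B) ** Uop Jx Jz t B th)"
    by (simp add: gen_def)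
  also have "\<dots> = cscale \<i> (Rep_cm (Rp th * (exp (B *\<^sub>R (t *\<^sub>R kx)) * (t *\<^sub>R kx)) * Rm th) ** Rep_cm (Rp th * exp ((- B) *\<^sub>R (t *\<^sub>R kx)) * Rm th))"
    by (simp only: vd Uop_eq[of t B th])
  also have "\<dots> = Rep_cm (II * (Rp th * (exp (B *\<^sub>R (t *\<^sub>R kx)) * (t *\<^sub>R kx)) * Rm th)
    * (Rp th * exp ((- B) *\<^sub>R (t *\<^sub>R kx)) * Rm th))"
    by (simp only: mult.assoc[of II] Rep_mult Rep_cs cscale_mat)
  also have "\<dots> = Rep_cm (- (t *\<^sub>R ath th))" by (simp only: gen1)
  finally show ?thesis .
qed

lemma gen2_eq: "gen Jx Jz t B th 2 = Rep_cm (- Abs_cm Jy + cos (B * t) *\<^sub>R Abs_cm Jy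
    - sin (B * t) *\<^sub>R (cos th *\<^sub>R Abs_cm Jz - sin th *\<^sub>R Abs_cm Jx))"
proof -
  have f: "(\<lambda>s. cadj (Uop Jx Jz t B s)) = (\<lambda>s. Rep_cm (Rp s * exp (B *\<^sub>R (t *\<^sub>R kx)) * Rm s))"
    by (simp add: Uadj_eq)
  have "((\<lambda>s. Rep_cm (Rp s * exp (B *\<^sub>R (t *\<^sub>R kx)) * Rm s)) has_vector_derivative
      Rep_cm (Rp th * ky * exp (B *\<^sub>R (t *\<^sub>R kx)) * Rm th - Rp th * exp (B *\<^sub>R (t *\<^sub>R kx)) * Rm th * ky)) (at th)"
    by (rule bounded_linear.has_vector_derivative[OF bounded_linear_Rep_cm dth])
  then have vd: "vector_derivative (\<lambda>s. cadj (Uop Jx Jz t B s)) (at th)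
      = Rep_cm (Rp th * ky * exp (B *\<^sub>R (t *\<^sub>R kx)) * Rm th - Rp th * exp (B *\<^sub>R (t *\<^sub>R kx)) * Rm th * ky)"
    unfolding f by (rule vector_derivative_at)
  have "gen Jx Jz t B th 2 = cscale \<i> (vector_derivative (\<lambda>s. cadj (Uop Jx Jz t B s)) (at th) ** Uop Jx Jz t B th)"
    by (simp add: gen_def)
  also have "\<dots> = cscale \<i> (Rep_cm (Rp th * ky * exp (B *\<^sub>R (t *\<^sub>R kx)) * Rm th
       - Rp th * exp (B *\<^sub>R (t *\<^sub>R kx)) * Rm th * ky) ** Rep_cm (Rp th * exp ((- B) *\<^sub>R (t *\<^sub>R kx)) * Rm th))"
    by (simp only: vd Uop_eq[of t B th])
  also have "\<dots> = Rep_cm (II * (Rp th * ky * exp (B *\<^sub>R (t *\<^sub>R kx)) * Rm th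
       - Rp th * exp (B *\<^sub>R (t *\<^sub>R kx)) * Rm th * ky)
    * (Rp th * exp ((- B) *\<^sub>R (t *\<^sub>R kx)) * Rm th))"
    by (simp only: mult.assoc[of II] Rep_mult Rep_cs cscale_mat)
  also have "\<dots> = Rep_cm (- Abs_cm Jy + cos (B * t) *\<^sub>R Abs_cm Jy
    - sin (B * t) *\<^sub>R (cos th *\<^sub>R Abs_cm Jz - sin th *\<^sub>R Abs_cm Jx))" by (simp only: gen2)
  finally show ?thesis .
qed

end


definition jd :: "'a::finite cm \<Rightarrow> 'a cm \<Rightarrow> 'a cm \<Rightarrow> real^3 \<Rightarrow> 'a cm" where
  "jd x y z n = n$1 *\<^sub>R x + n$2 *\<^sub>R y + n$3 *\<^sub>R z"

lemma Jdir_eq: "Jdir Jx Jy Jz n = Rep_cm (jd (Abs_cm Jx) (Abs_cm Jy) (Abs_cm Jz) n)"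
  by (simp add: Jdir_def jd_def cscale_real Rep_add Rep_scaleR Abs_cm_inverse)

lemma expect_add: "expect psi (A + B) = expect psi A + expect psi B"
  by (simp add: expect_def matrix_vector_mult_add_rdistrib distrib_left sum.distrib)

lemma expect_cscale: "expect psi (cscale c A) = c * expect psi A"
proof -
  have "(cscale c A) *v psi = c *s (A *v psi)"
    by (simp add: cscale_def vec_eq_iff matrix_vector_mult_def sum_distrib_left mult.assoc)
  then show ?thesis
    by (simp add: expect_def sum_distrib_left mult.left_commute)
qed

lemma expect_scaleR: "expect psi (r *\<^sub>R A) = of_real r * expect psi A"
  using expect_cscale[of psi "of_real r" A] by (simp add: cscale_real)

lemma expect_uminus: "expect psi (- A) = - expect psi A"
  using expect_scaleR[of psi "-1" A] by simp

lemma expect_diff: "expect psi (A - B) = expect psi A - expect psi B"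
  using expect_add[of psi A "- B"] expect_uminus[of psi B] by simp

definition EE :: "complex^'a::finite \<Rightarrow> 'a cm \<Rightarrow> complex" where
  "EE psi a = expect psi (Rep_cm a)"

lemma EE_add: "EE psi (a + b) = EE psi a + EE psi b"
  by (simp add: EE_def Rep_add expect_add)
lemma EE_diff: "EE psi (a - b) = EE psi a - EE psi b"
  by (simp add: EE_def Rep_diff expect_diff)
lemma EE_uminus: "EE psi (- a) = - EE psi a"
  by (simp add: EE_def Rep_uminus expect_uminus)
lemma EE_scaleR: "EE psi (r *\<^sub>R a) = of_real r * EE psi a"
  by (simp add: EE_def Rep_scaleR expect_scaleR)
lemma EE_II: "EE psi (II * a) = \<i> * EE psi a"
  by (simp add: EE_def Rep_cs_mult expect_cscale)
lemma EE_zero: "EE psi 0 = 0"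
  using EE_diff[of psi 0 0] by simp
lemmas EE_simps = EE_zero EE_add EE_diff EE_uminus EE_scaleR EE_II

lemma acomm_Rep: "acomm (Rep_cm a) (Rep_cm b) = Rep_cm (a * b + b * a)"
  by (simp add: acomm_def Rep_add Rep_mult)
lemma comm_Rep: "comm (Rep_cm a) (Rep_cm b) = Rep_cm (a * b - b * a)"
  by (simp add: comm_def Rep_diff Rep_mult)

context su2
begin

lemma jd_comm: "jd x y z a * jd x y z b - jd x y z b * jd x y z a = II * jd x y z (cross3 a b)"
proof -
  have "jd x y z a * jd x y z b - jd x y z b * jd x y z a =
     (a$1 * b$2 - a$2 * b$1) *\<^sub>R (x * y - y * x) + (a$2 * b$3 - a$3 * b$2) *\<^sub>R (y * z - z * y)
     + (a$3 * b$1 - a$1 * b$3) *\<^sub>R (z * x - x * z)"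
    by (simp add: jd_def algebra_simps)
  also have "\<dots> = II * jd x y z (cross3 a b)"
    unfolding c1 c2 c3 by (simp add: jd_def cross3_def algebra_simps II_left)
  finally show ?thesis .
qed

end


lemma jd_uminus: "jd x y z (- v) = - jd x y z v"
  by (simp add: jd_def algebra_simps)

context su2mat
begin

lemma ath_jd: "ath th = jd (Abs_cm Jx) (Abs_cm Jy) (Abs_cm Jz) (vector [cos th, 0, sin th])"
  by (simp add: ath_def jd_def)

lemma gen1_jd: "gen Jx Jz t B th 1 = Rep_cm (- (t *\<^sub>R jd (Abs_cm Jx) (Abs_cm Jy) (Abs_cm Jz) (vector [cos th, 0, sin th])))"
  by (simp add: gen1_eq ath_jd)

lemma gen2_jd: "gen Jx Jz t B th 2 = Rep_cm ((2 * sin (B * t / 2)) *\<^sub>R jd (Abs_cm Jx) (Abs_cm Jy) (Abs_cm Jz)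
     (vector [cos (B*t/2) * sin th, - sin (B*t/2), - cos (B*t/2) * cos th]))"
proof -
  define h where "h = B * t / 2"
  have bt: "B * t = 2 * h" by (simp add: h_def)
  have cb: "cos (B * t) = 1 - 2 * sin h ^ 2" unfolding bt by (rule cos_double_sin)
  have sb: "sin (B * t) = 2 * sin h * cos h" unfolding bt by (rule sin_double)
  have "- Abs_cm Jy + cos (B * t) *\<^sub>R Abs_cm Jy - sin (B * t) *\<^sub>R (cos th *\<^sub>R Abs_cm Jz - sin th *\<^sub>R Abs_cm Jx)
     = (2 * sin h) *\<^sub>R jd (Abs_cm Jx) (Abs_cm Jy) (Abs_cm Jz) (vector [cos h * sin th, - sin h, - cos h * cos th])"
    unfolding cb sb by (simp add: jd_def algebra_simps power2_eq_square)
  then show ?thesis by (simp add: gen2_eq h_def)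
qed

end


lemma QFIM_entry: "QFIM Jx Jz t psi B th $ l $ l' = 2 * EE psi (g l * g l' + g l' * g l) - 4 * EE psi (g l) * EE psi (g l')"
  if "\<And>l. gen Jx Jz t B th l = Rep_cm (g l)"
  by (simp add: QFIM_def that acomm_Rep EE_def)

lemma Uhl_entry: "Uhlmann Jx Jz t psi B th $ l $ l' = - 2 * \<i> * EE psi (g l * g l' - g l' * g l)"
  if "\<And>l. gen Jx Jz t B th l = Rep_cm (g l)"
  by (simp add: Uhlmann_def that comm_Rep EE_def)

context su2mat
begin

lemma QD:
  fixes psi :: "complex^'a" and t B th :: real
  defines "nT \<equiv> vector [cos th, 0, sin th] :: real^3"
    and "n1 \<equiv> vector [cos (B*t/2) * sin th, - sin (B*t/2), - cos (B*t/2) * cos th] :: real^3"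
    and "Q \<equiv> QFIM Jx Jz t psi B th"
    and "D \<equiv> Uhlmann Jx Jz t psi B th"
  shows
    "(Q$1$1 = 4 * (of_real t)^2 * variance psi (Jdir Jx Jy Jz nT))
     \<and> (Q$2$2 = 16 * (of_real (sin (B*t/2)))^2 * variance psi (Jdir Jx Jy Jz n1))
     \<and> (Q$1$2 = - 4 * of_real t * of_real (sin (B*t/2)) *
       (expect psi (acomm (Jdir Jx Jy Jz n1) (Jdir Jx Jy Jz nT))
        - 2 * expect psi (Jdir Jx Jy Jz n1) * expect psi (Jdir Jx Jy Jz nT)))
     \<and> (Q$2$1 = Q$1$2)
     \<and> (D$1$1 = 0) \<and> (D$2$2 = 0)
     \<and> (D$2$1 = 4 * of_real t * of_real (sin (B*t/2)) * expect psi (Jdir Jx Jy Jz (cross3 nT n1)))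
     \<and> (D$1$2 = - D$2$1)"
proof -
  let ?x = "Abs_cm Jx" and ?y = "Abs_cm Jy" and ?z = "Abs_cm Jz"
  define A where "A = jd ?x ?y ?z nT"
  define J where "J = jd ?x ?y ?z n1"
  define s where "s = sin (B * t / 2)"
  define g where "g l = (if l = 1 then - (t *\<^sub>R A) else (2 * s) *\<^sub>R J)" for l :: 2
  have g1: "g 1 = - (t *\<^sub>R A)" by (simp add: g_def)
  have g2: "g 2 = (2 * s) *\<^sub>R J" by (simp add: g_def)
  have gen: "gen Jx Jz t B th l = Rep_cm (g l)" for l
  proof (cases "l = 1")
    case True then show ?thesis by (simp add: g1 gen1_jd A_def nT_def)
  next
    case False then have "l = 2" by (metis exhaust_2)
    then show ?thesis by (simp add: g2 gen2_jd J_def n1_def s_def)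
  qed
  have QE: "Q $ l $ l' = 2 * EE psi (g l * g l' + g l' * g l) - 4 * EE psi (g l) * EE psi (g l')" for l l'
    unfolding Q_def by (rule QFIM_entry[OF gen])
  have DE: "D $ l $ l' = - 2 * \<i> * EE psi (g l * g l' - g l' * g l)" for l l'
    unfolding D_def by (rule Uhl_entry[OF gen])
  have JA: "Jdir Jx Jy Jz nT = Rep_cm A" "Jdir Jx Jy Jz n1 = Rep_cm J"
    by (simp_all add: Jdir_eq A_def J_def)
  have JC: "Jdir Jx Jy Jz (cross3 nT n1) = - Rep_cm (jd ?x ?y ?z (cross3 n1 nT))"
    by (simp add: Jdir_eq Rep_uminus[symmetric] jd_uminus[symmetric] cross_skew[of n1 nT])
  have var: "variance psi (Rep_cm a) = EE psi (a * a) - (EE psi a)^2" for a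
    by (simp add: variance_def EE_def Rep_mult)
  have ex: "expect psi (Rep_cm a) = EE psi a" for a by (simp add: EE_def)
  have q11: "Q$1$1 = 4 * (of_real t)^2 * variance psi (Jdir Jx Jy Jz nT)"
    unfolding QE g1 JA var by (simp add: EE_simps algebra_simps power2_eq_square)
  have q22: "Q$2$2 = 16 * (of_real (sin (B*t/2)))^2 * variance psi (Jdir Jx Jy Jz n1)"
    unfolding QE g2 JA var s_def by (simp add: EE_simps algebra_simps power2_eq_square)
  have q12: "Q$1$2 = - 4 * of_real t * of_real (sin (B*t/2)) *
       (expect psi (acomm (Jdir Jx Jy Jz n1) (Jdir Jx Jy Jz nT))
        - 2 * expect psi (Jdir Jx Jy Jz n1) * expect psi (Jdir Jx Jy Jz nT))"
    unfolding QE g1 g2 JA acomm_Rep ex s_def by (simp add: EE_simps algebra_simps)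
  have q21: "Q$2$1 = Q$1$2"
    unfolding QE by (simp add: algebra_simps)
  have d11: "D$1$1 = 0" unfolding DE by (simp add: EE_zero)
  have d22: "D$2$2 = 0" unfolding DE by (simp add: EE_zero)
  have cm: "g 2 * g 1 - g 1 * g 2 = (- (2 * s * t)) *\<^sub>R (J * A - A * J)"
    unfolding g1 g2 by (simp add: algebra_simps)
  have JAc: "J * A - A * J = II * jd ?x ?y ?z (cross3 n1 nT)"
    unfolding J_def A_def by (rule jd_comm)
  have d21: "D$2$1 = 4 * of_real t * of_real (sin (B*t/2)) * expect psi (Jdir Jx Jy Jz (cross3 nT n1))"
    unfolding DE cm JAc JC s_def by (simp add: EE_simps expect_uminus ex algebra_simps)
  have d12: "D$1$2 = - D$2$1"
  proof -
    have "g 1 * g 2 - g 2 * g 1 = - (g 2 * g 1 - g 1 * g 2)" by simp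
    then show ?thesis unfolding DE by (simp only: EE_uminus) simp
  qed
  show ?thesis using q11 q22 q12 q21 d11 d22 d21 d12 by blast
qed

end


lemma matrix_inv_eq:
  fixes Q Qi :: "'b::comm_ring_1^'n^'n"
  assumes "Q ** Qi = mat 1" "Qi ** Q = mat 1"
  shows "matrix_inv Q = Qi"
proof -
  let ?A = "matrix_inv Q"
  have "Q ** ?A = mat 1 \<and> ?A ** Q = mat 1"
    unfolding matrix_inv_def by (rule someI[of _ Qi]) (use assms in auto)
  then have "?A ** Q = mat 1" by blast
  have "?A = ?A ** (Q ** Qi)" using assms(1) by simp
  also have "\<dots> = (?A ** Q) ** Qi" by (rule matrix_mul_assoc)
  also have "\<dots> = Qi" using \<open>?A ** Q = mat 1\<close> by simp
  finally show ?thesis .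
qed

lemma AI_2x2:
  fixes Q D :: "complex^2^2" and a b c d :: real
  assumes q: "Q$1$1 = of_real a" "Q$1$2 = of_real b" "Q$2$1 = of_real b" "Q$2$2 = of_real c"
    and dd: "D$1$1 = 0" "D$2$2 = 0" "D$2$1 = of_real d" "D$1$2 = - of_real d"
    and pos: "a * c - b^2 > 0"
  shows "complex_of_real (AI Q D) = csqrt (det D / det Q)"
proof -
  define \<Delta> where "\<Delta> = a * c - b^2"
  have Dp: "\<Delta> > 0" using pos by (simp add: \<Delta>_def)
  have hD: "a * c = \<Delta> + b * b" by (simp add: \<Delta>_def power2_eq_square)
  have hD4: "\<And>w. a * (c * w) = \<Delta> * w + b * (b * w)" using hD by (metis distrib_right mult.assoc)
  have hD': "c * a = \<Delta> + b * b" by (simp add: \<Delta>_def power2_eq_square)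
  define Qi :: "complex^2^2" where "Qi = (\<chi> i j. if i = 1 \<and> j = 1 then of_real (c / \<Delta>)
      else if i = 2 \<and> j = 2 then of_real (a / \<Delta>) else of_real (- b / \<Delta>))"
  have Qi: "Qi$1$1 = of_real (c / \<Delta>)" "Qi$1$2 = of_real (- b / \<Delta>)" "Qi$2$1 = of_real (- b / \<Delta>)"
      "Qi$2$2 = of_real (a / \<Delta>)"
    by (simp_all add: Qi_def)
  have QQi: "Q ** Qi = mat 1"
    using Dp by (simp add: vec_eq_iff forall_2 matrix_matrix_mult_def sum_2 q Qi mat_def
        field_simps hD hD' flip: of_real_mult of_real_add of_real_diff)
  have QiQ: "Qi ** Q = mat 1"
    using Dp by (simp add: vec_eq_iff forall_2 matrix_matrix_mult_def sum_2 q Qi mat_def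
        field_simps hD hD' flip: of_real_mult of_real_add of_real_diff)
  have inv: "matrix_inv Q = Qi" by (rule matrix_inv_eq[OF QQi QiQ])
  define M where "M = Qi ** D"
  have M: "M$1$1 = of_real (- b * d / \<Delta>)" "M$1$2 = of_real (- c * d / \<Delta>)"
     "M$2$1 = of_real (a * d / \<Delta>)" "M$2$2 = of_real (b * d / \<Delta>)"
    by (simp_all add: M_def matrix_matrix_mult_def sum_2 Qi dd)
  define r where "r = sqrt (d^2 / \<Delta>)"
  have MM: "M ** M = mat (of_real (- (d^2 / \<Delta>)))"
    using Dp by (simp add: vec_eq_iff forall_2 matrix_matrix_mult_def sum_2 M mat_def
        field_simps hD hD' hD4 power2_eq_square flip: of_real_mult of_real_add of_real_diff of_real_minus)
  have ev: "cmod \<mu> = r" if "is_eigenvalue M \<mu>" for \<mu>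
  proof -
    from that obtain v where v0: "v \<noteq> 0" and Mv: "M *v v = \<mu> *s v" by (auto simp: is_eigenvalue_def)
    have "(M ** M) *v v = M *v (M *v v)" by (simp add: matrix_vector_mul_assoc)
    also have "\<dots> = M *v (\<mu> *s v)" using Mv by simp
    also have "\<dots> = \<mu> *s (M *v v)"
      by (simp add: vec_eq_iff matrix_vector_mult_def sum_distrib_left mult.left_commute)
    also have "\<dots> = \<mu>^2 *s v" using Mv by (simp add: power2_eq_square)
    finally have "(M ** M) *v v = \<mu>^2 *s v" .
    have mk: "mat k *v w = k *s w" for k :: complex and w :: "complex^2"
      by (simp add: vec_eq_iff matrix_vector_mult_def mat_def sum_2 forall_2)
    have h: "of_real (- (d^2 / \<Delta>)) *s v = \<mu>^2 *s v"
      using \<open>(M ** M) *v v = \<mu>^2 *s v\<close> by (simp only: MM mk)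
    have "(of_real (- (d^2 / \<Delta>)) - \<mu>^2) *s v = 0"
      by (metis h vector_sub_rdistrib diff_self)
    then have "of_real (- (d^2 / \<Delta>)) - \<mu>^2 = 0" using v0 vector_mul_eq_0 by blast
    then have mu2: "\<mu>^2 = of_real (- (d^2 / \<Delta>))" by (metis right_minus_eq)
    have "cmod \<mu> ^ 2 = cmod (\<mu>^2)" by (simp add: norm_power)
    also have "\<dots> = cmod (complex_of_real (- (d^2 / \<Delta>)))" by (simp only: mu2)
    also have "\<dots> = \<bar>- (d^2 / \<Delta>)\<bar>" by (simp only: norm_of_real)
    also have "\<dots> = d^2 / \<Delta>" using Dp by simp
    finally have "cmod \<mu> ^ 2 = d^2 / \<Delta>" .
    then show ?thesis unfolding r_def by (simp add: real_sqrt_unique)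
  qed
  have ex: "is_eigenvalue M (\<i> * of_real (d / sqrt \<Delta>))"
  proof -
    define v :: "complex^2" where "v = vector [of_real c, - of_real b - \<i> * of_real (sqrt \<Delta>)]"
    have v2: "v$2 \<noteq> 0" using Dp by (simp add: v_def complex_eq_iff)
    then have "v \<noteq> 0" by auto
    moreover have "M *v v = (\<i> * of_real (d / sqrt \<Delta>)) *s v"
      using Dp by (simp add: vec_eq_iff forall_2 matrix_vector_mult_def sum_2 M v_def field_simps
          complex_eq_iff hD hD' hD4 power2_eq_square)
    ultimately show ?thesis unfolding is_eigenvalue_def by blast
  qed
  have S: "{cmod \<mu> | \<mu>. is_eigenvalue M \<mu>} = {r}"
    using ev ex by auto
  have AI: "AI Q D = r" unfolding AI_def inv M_def[symmetric] S by simp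
  have detQ: "det Q = of_real \<Delta>" by (simp add: det_2 q \<Delta>_def power2_eq_square)
  have detD: "det D = of_real (d^2)" by (simp add: det_2 dd power2_eq_square)
  have "det D / det Q = of_real (d^2 / \<Delta>)" by (simp add: detQ detD)
  then show ?thesis using Dp by (simp add: AI r_def csqrt_of_real)
qed


definition cin :: "complex^'a::finite \<Rightarrow> complex^'a \<Rightarrow> complex" where
  "cin a b = (\<Sum>i\<in>UNIV. cnj (a$i) * b$i)"

lemma expect_cin: "expect psi X = cin psi (X *v psi)"
  by (simp add: expect_def cin_def)

lemma cin_herm:
  assumes "cadj H = H"
  shows "cin (H *v a) b = cin a (H *v b)"
proof -
  have Hc: "cnj (H$j$i) = H$i$j" for i j
    using arg_cong[OF assms, of "\<lambda>M. M$i$j"] by (simp add: cadj_def)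
  have "cin (H *v a) b = (\<Sum>j\<in>UNIV. \<Sum>i\<in>UNIV. cnj (H$j$i) * cnj (a$i) * b$j)"
    by (simp add: cin_def matrix_vector_mult_def sum_distrib_right)
  also have "\<dots> = (\<Sum>i\<in>UNIV. \<Sum>j\<in>UNIV. cnj (a$i) * (H$i$j * b$j))"
    by (subst sum.swap) (simp add: Hc mult.assoc mult.left_commute)
  also have "\<dots> = cin a (H *v b)"
    by (simp add: cin_def matrix_vector_mult_def sum_distrib_left)
  finally show ?thesis .
qed

lemma cin_cnj: "cnj (cin a b) = cin b a"
  by (simp add: cin_def mult.commute)

lemma Re_cin: "Re (cin a b) = inner a b"
  by (simp add: cin_def inner_vec_def inner_complex_def Re_sum)

lemma cin_add_left: "cin (a + b) c = cin a c + cin b c"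
  by (simp add: cin_def distrib_right sum.distrib)
lemma cin_add_right: "cin a (b + c) = cin a b + cin a c"
  by (simp add: cin_def distrib_left sum.distrib)
lemma cin_diff_left: "cin (a - b) c = cin a c - cin b c"
  by (simp add: cin_def left_diff_distrib sum_subtractf)
lemma cin_diff_right: "cin a (b - c) = cin a b - cin a c"
  by (simp add: cin_def right_diff_distrib sum_subtractf)
lemma vsc: "(r *\<^sub>R a) $ i = of_real r * (a $ i :: complex)"
  by (simp only: vector_scaleR_component) (simp add: scaleR_conv_of_real)
lemma cin_scaleR_left: "cin (r *\<^sub>R a) c = of_real r * cin a c"
  by (simp add: cin_def vsc sum_distrib_left mult.assoc) (simp add: scaleR_conv_of_real)
lemma cin_scaleR_right: "cin a (r *\<^sub>R c) = of_real r * cin a c"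
  by (simp add: cin_def vsc sum_distrib_left mult.left_commute) (simp add: scaleR_conv_of_real)

lemma cin_self: "norm a = 1 \<Longrightarrow> cin a a = 1"
proof -
  assume n: "norm a = 1"
  have re: "Re (cin a a) = 1" using n by (simp add: Re_cin power2_norm_eq_inner[symmetric])
  have "Im (cnj (cin a a)) = Im (cin a a)" using cin_cnj[of a a] by simp
  then have im: "Im (cin a a) = 0" by simp
  show ?thesis using re im by (simp add: complex_eq_iff)
qed

lemma expect_real:
  assumes "cadj H = H"
  shows "expect psi H = of_real (Re (expect psi H))"
proof -
  have "cnj (expect psi H) = expect psi H"
    by (simp add: expect_cin cin_cnj cin_herm[OF assms])
  then have "Im (cnj (expect psi H)) = Im (expect psi H)" by simp
  then have "Im (expect psi H) = 0" by simp
  then show ?thesis by (simp add: complex_eq_iff)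
qed

lemma gram:
  assumes h1: "cadj H1 = H1" and h2: "cadj H2 = H2" and n: "norm psi = 1"
  defines "u1 \<equiv> H1 *v psi - Re (expect psi H1) *\<^sub>R psi"
    and "u2 \<equiv> H2 *v psi - Re (expect psi H2) *\<^sub>R psi"
  shows "2 * expect psi (H1 ** H2 + H2 ** H1) - 4 * expect psi H1 * expect psi H2 = of_real (4 * inner u1 u2)"
proof -
  define h1' where "h1' = Re (expect psi H1)"
  define h2' where "h2' = Re (expect psi H2)"
  define c where "c = cin (H1 *v psi) (H2 *v psi)"
  have e1: "expect psi H1 = of_real h1'" unfolding h1'_def by (rule expect_real[OF h1])
  have e2: "expect psi H2 = of_real h2'" unfolding h2'_def by (rule expect_real[OF h2])
  have a1: "cin psi (H1 *v psi) = of_real h1'" using e1 by (simp add: expect_cin)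
  have a1': "cin (H1 *v psi) psi = of_real h1'" using a1 by (simp add: cin_herm[OF h1])
  have a2: "cin psi (H2 *v psi) = of_real h2'" using e2 by (simp add: expect_cin)
  have pp: "cin psi psi = 1" by (rule cin_self[OF n])
  have "expect psi (H1 ** H2 + H2 ** H1) = c + cnj c"
    by (simp add: expect_cin matrix_vector_mult_add_rdistrib cin_add_right matrix_vector_mul_assoc[symmetric]
        cin_herm[OF h1, symmetric] cin_herm[OF h2, symmetric] c_def cin_cnj)
  also have "\<dots> = of_real (2 * Re c)" by (simp add: complex_add_cnj)
  finally have ee: "expect psi (H1 ** H2 + H2 ** H1) = of_real (2 * Re c)" .
  have "cin u1 u2 = c - of_real h2' * of_real h1' - of_real h1' * of_real h2' + of_real h1' * of_real h2'"
    unfolding u1_def u2_def h1'_def[symmetric] h2'_def[symmetric]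
    by (simp add: cin_diff_left cin_diff_right cin_scaleR_left cin_scaleR_right a1' a2 pp c_def)
  then have "inner u1 u2 = Re c - h1' * h2'" by (simp flip: Re_cin)
  then show ?thesis by (simp add: ee e1 e2)
qed


lemma (in su2) adjc_jd: "adjc (jd x y z n) = jd x y z n"
  by (simp add: jd_def adjc_add adjc_scaleR hx hy hz)

context su2mat
begin

lemma gen_herm: "cadj (gen Jx Jz t B th l) = gen Jx Jz t B th l"
proof (cases "l = 1")
  case True then show ?thesis
    by (simp add: gen1_jd cadj_Rep adjc_uminus adjc_scaleR adjc_jd)
next
  case False then have "l = 2" by (metis exhaust_2)
  then show ?thesis
    by (simp add: gen2_jd cadj_Rep adjc_scaleR adjc_jd)
qed

lemma Q_gram:
  assumes n: "norm psi = 1"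
  shows "QFIM Jx Jz t psi B th $ l $ l' =
    of_real (4 * inner (gen Jx Jz t B th l *v psi - Re (expect psi (gen Jx Jz t B th l)) *\<^sub>R psi)
                       (gen Jx Jz t B th l' *v psi - Re (expect psi (gen Jx Jz t B th l')) *\<^sub>R psi))"
  unfolding QFIM_def acomm_def by (simp add: gram[OF gen_herm gen_herm n])

lemma Jdir_herm: "cadj (Jdir Jx Jy Jz n) = Jdir Jx Jy Jz n"
  by (simp add: Jdir_eq cadj_Rep adjc_jd)

end

theorem mainTheorem3:
  fixes Jx Jy Jz :: "complex^'n^'n" and psi0 :: "complex^'n"
    and t B \<theta> :: real
  assumes herm: "hermitian Jx" "hermitian Jy" "hermitian Jz"
    and su2: "comm Jx Jy = cscale \<i> Jz" "comm Jy Jz = cscale \<i> Jx" "comm Jz Jx = cscale \<i> Jy"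
    and unit: "norm psi0 = 1"
  defines "n\<theta> \<equiv> vector [cos \<theta>, 0, sin \<theta>] :: real^3"
    and "n1 \<equiv> vector [cos (B*t/2) * sin \<theta>, - sin (B*t/2), - cos (B*t/2) * cos \<theta>] :: real^3"
    and "Q \<equiv> QFIM Jx Jz t psi0 B \<theta>"
    and "D \<equiv> Uhlmann Jx Jz t psi0 B \<theta>"
  shows
    "(Q$1$1 = 4 * (of_real t)^2 * variance psi0 (Jdir Jx Jy Jz n\<theta>))
     \<and> (Q$2$2 = 16 * (of_real (sin (B*t/2)))^2 * variance psi0 (Jdir Jx Jy Jz n1))
     \<and> (Q$1$2 = - 4 * of_real t * of_real (sin (B*t/2)) *
       (expect psi0 (acomm (Jdir Jx Jy Jz n1) (Jdir Jx Jy Jz n\<theta>))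
        - 2 * expect psi0 (Jdir Jx Jy Jz n1) * expect psi0 (Jdir Jx Jy Jz n\<theta>)))
     \<and> (Q$2$1 = Q$1$2)
     \<and> (D$1$1 = 0) \<and> (D$2$2 = 0)
     \<and> (D$2$1 = 4 * of_real t * of_real (sin (B*t/2)) * expect psi0 (Jdir Jx Jy Jz (cross3 n\<theta> n1)))
     \<and> (D$1$2 = - D$2$1)
     \<and> (det D = 16 * (of_real t)^2 * (of_real (sin (B*t/2)))^2 * (expect psi0 (Jdir Jx Jy Jz (cross3 n\<theta> n1)))^2)
     \<and> (det Q = 16 * (of_real t)^2 * (of_real (sin (B*t/2)))^2 *
       (4 * variance psi0 (Jdir Jx Jy Jz n\<theta>) * variance psi0 (Jdir Jx Jy Jz n1)
        - (expect psi0 (acomm (Jdir Jx Jy Jz n1) (Jdir Jx Jy Jz n\<theta>))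
           - 2 * expect psi0 (Jdir Jx Jy Jz n1) * expect psi0 (Jdir Jx Jy Jz n\<theta>))^2))
     \<and> (det Q \<noteq> 0 \<longrightarrow> complex_of_real (AI Q D) = csqrt (det D / det Q))"
proof -
  interpret su2mat Jx Jy Jz
    using herm su2 by unfold_locales
  have qd: "(Q$1$1 = 4 * (of_real t)^2 * variance psi0 (Jdir Jx Jy Jz n\<theta>))
     \<and> (Q$2$2 = 16 * (of_real (sin (B*t/2)))^2 * variance psi0 (Jdir Jx Jy Jz n1))
     \<and> (Q$1$2 = - 4 * of_real t * of_real (sin (B*t/2)) *
       (expect psi0 (acomm (Jdir Jx Jy Jz n1) (Jdir Jx Jy Jz n\<theta>))
        - 2 * expect psi0 (Jdir Jx Jy Jz n1) * expect psi0 (Jdir Jx Jy Jz n\<theta>)))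
     \<and> (Q$2$1 = Q$1$2)
     \<and> (D$1$1 = 0) \<and> (D$2$2 = 0)
     \<and> (D$2$1 = 4 * of_real t * of_real (sin (B*t/2)) * expect psi0 (Jdir Jx Jy Jz (cross3 n\<theta> n1)))
     \<and> (D$1$2 = - D$2$1)"
    unfolding n\<theta>_def n1_def Q_def D_def by (rule QD)
  then have q11: "Q$1$1 = 4 * (of_real t)^2 * variance psi0 (Jdir Jx Jy Jz n\<theta>)"
    and q22: "Q$2$2 = 16 * (of_real (sin (B*t/2)))^2 * variance psi0 (Jdir Jx Jy Jz n1)"
    and q12: "Q$1$2 = - 4 * of_real t * of_real (sin (B*t/2)) *
       (expect psi0 (acomm (Jdir Jx Jy Jz n1) (Jdir Jx Jy Jz n\<theta>))
        - 2 * expect psi0 (Jdir Jx Jy Jz n1) * expect psi0 (Jdir Jx Jy Jz n\<theta>))"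
    and q21: "Q$2$1 = Q$1$2"
    and d11: "D$1$1 = 0" and d22: "D$2$2 = 0"
    and d21: "D$2$1 = 4 * of_real t * of_real (sin (B*t/2)) * expect psi0 (Jdir Jx Jy Jz (cross3 n\<theta> n1))"
    and d12: "D$1$2 = - D$2$1"
    by blast+
  have detD: "det D = 16 * (of_real t)^2 * (of_real (sin (B*t/2)))^2 * (expect psi0 (Jdir Jx Jy Jz (cross3 n\<theta> n1)))^2"
    by (simp add: det_2 d11 d22 d12 d21 power2_eq_square algebra_simps)
  have detQ: "det Q = 16 * (of_real t)^2 * (of_real (sin (B*t/2)))^2 *
       (4 * variance psi0 (Jdir Jx Jy Jz n\<theta>) * variance psi0 (Jdir Jx Jy Jz n1)
        - (expect psi0 (acomm (Jdir Jx Jy Jz n1) (Jdir Jx Jy Jz n\<theta>))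
           - 2 * expect psi0 (Jdir Jx Jy Jz n1) * expect psi0 (Jdir Jx Jy Jz n\<theta>))^2)"
    by (simp add: det_2 q11 q22 q21 q12 power2_eq_square algebra_simps)
  have ai: "complex_of_real (AI Q D) = csqrt (det D / det Q)" if nz: "det Q \<noteq> 0"
  proof -
    define u where "u l = gen Jx Jz t B \<theta> l *v psi0 - Re (expect psi0 (gen Jx Jz t B \<theta> l)) *\<^sub>R psi0" for l
    have qg: "Q $ l $ l' = of_real (4 * inner (u l) (u l'))" for l l'
      unfolding Q_def u_def by (rule Q_gram[OF unit])
    define e where "e = Re (expect psi0 (Jdir Jx Jy Jz (cross3 n\<theta> n1)))"
    have ee: "expect psi0 (Jdir Jx Jy Jz (cross3 n\<theta> n1)) = of_real e"
      unfolding e_def by (rule expect_real[OF Jdir_herm])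
    define d where "d = 4 * t * sin (B*t/2) * e"
    have dd: "D$2$1 = of_real d" "D$1$2 = - of_real d"
      by (simp_all add: d12 d21 ee d_def)
    have cs: "(inner (u 1) (u 2))^2 \<le> inner (u 1) (u 1) * inner (u 2) (u 2)"
      by (rule Cauchy_Schwarz_ineq)
    have dq: "det Q = of_real ((4 * inner (u 1) (u 1)) * (4 * inner (u 2) (u 2)) - (4 * inner (u 1) (u 2))^2)"
      by (simp add: det_2 qg inner_commute power2_eq_square)
    have "(4 * inner (u 1) (u 1)) * (4 * inner (u 2) (u 2)) - (4 * inner (u 1) (u 2))^2 \<ge> 0"
      using cs by (simp add: power2_eq_square algebra_simps)
    moreover have "(4 * inner (u 1) (u 1)) * (4 * inner (u 2) (u 2)) - (4 * inner (u 1) (u 2))^2 \<noteq> 0"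
      by (metis dq nz of_real_0)
    ultimately have pos: "(4 * inner (u 1) (u 1)) * (4 * inner (u 2) (u 2)) - (4 * inner (u 1) (u 2))^2 > 0"
      by linarith
    show ?thesis
      by (rule AI_2x2[OF qg[of 1 1] qg[of 1 2] _ qg[of 2 2] d11 d22 dd pos])
         (simp add: qg inner_commute)
  qed
  show ?thesis using q11 q22 q12 q21 d11 d22 d21 d12 detD detQ ai by blast
qed


end
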